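(* Let $(\mathcal{X},\|\cdot\|)$ be a real Banach space, $P$ a probability distribution on a measurable space $\mathcal{E}$, and $Q,P_e:\mathcal{X}\to\mathcal{X}$ with $\|Q(\theta_1)-Q(\theta_2)\|\le\rho\|\theta_1-\theta_2\|$ ($\rho\in[0,1)$, $\theta^\star$ the unique fixed point of $Q$) and $\|P_e(\theta_1)-P_e(\theta_2)\|\le L\|\theta_1-\theta_2\|$ for all $e$ ($L\ge0$). Let $W_e:=\|P_e(\theta^\star)-\theta^\star\|$ and assume $\mathbb{E}[W_e]\le\sigma$ and $W_e\le M$ almost surely, where $0\le\sigma\le M$, and that $\gamma:=\rho L<1$. Let $\theta_0\in\mathcal{X}$, $e_0,e_1,\dots$ i.i.d. $\sim P$, $\theta_{t+1}=Q(P_{e_t}(\theta_t))$, and $R_0:=\|\theta_0-\theta^\star\|$. For every $r>\rho M/(1-\gamma)$ define $T_0(r):=0$ if $R_0\le r-\rho M/(1-\gamma)$, and otherwise \[T_0(r):=\left\lceil\frac{\log\big(R_0/(r-\rho M/(1-\gamma))\big)}{\log(1/\gamma)}\right\rceil.\] Then $\|\theta_t-\theta^\star\|\le r$ almost surely for all $t\ge T_0(r)$. *)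

theory Defs
  imports "HOL-Probability.Probability"
begin

fun theta_seq :: "('a \<Rightarrow> 'a) \<Rightarrow> ('e \<Rightarrow> 'a \<Rightarrow> 'a) \<Rightarrow> 'a \<Rightarrow> (nat \<Rightarrow> 'e) \<Rightarrow> nat \<Rightarrow> 'a" where
  "theta_seq Q Pe th0 es 0 = th0"
| "theta_seq Q Pe th0 es (Suc t) = Q (Pe (es t) (theta_seq Q Pe th0 es t))"

text \<open>When gamma = 0 the paper's formula contains log(1/0); we use its limiting
  value as gamma tends to 0 from above, namely 1 (ceiling of a positive
  quantity tending to 0).\<close>
definition T0 :: "real \<Rightarrow> real \<Rightarrow> real \<Rightarrow> real \<Rightarrow> real \<Rightarrow> nat" where
  "T0 R0 \<rho> \<gamma> M r =
     (let c = r - \<rho> * M / (1 - \<gamma>) in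
      if R0 \<le> c then 0
      else if \<gamma> = 0 then 1
      else nat \<lceil>ln (R0 / c) / ln (1 / \<gamma>)\<rceil>)"

end

theory Submission
  imports Defs
begin

lemma cancel_aux: "(x::real) \<noteq> 0 \<Longrightarrow> x * ((1 / x) * c) = c" by simp

lemma pathwise_bound:
  fixes Q :: "'a::banach \<Rightarrow> 'a" and Pe :: "'e \<Rightarrow> 'a \<Rightarrow> 'a"
  assumes Q_contr: "\<And>x y. norm (Q x - Q y) \<le> \<rho> * norm (x - y)"
    and Q_fix: "Q \<theta>s = \<theta>s" and rho: "0 \<le> \<rho>"
    and Pe_lip: "\<And>\<epsilon> x y. norm (Pe \<epsilon> x - Pe \<epsilon> y) \<le> L * norm (x - y)"
    and W: "\<And>n. norm (Pe (es n) \<theta>s - \<theta>s) \<le> M"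
    and g: "\<rho> * L < 1" and L: "0 \<le> L"
  shows "norm (theta_seq Q Pe \<theta>0 es t - \<theta>s)
     \<le> (\<rho> * L) ^ t * norm (\<theta>0 - \<theta>s) + \<rho> * M / (1 - \<rho> * L)"
proof (induction t)
  case 0
  have "0 \<le> \<rho> * M / (1 - \<rho> * L)"
  proof -
    have "0 \<le> M" using W[of 0] norm_ge_zero order_trans by blast
    then show ?thesis using rho g by simp
  qed
  then show ?case by simp
next
  case (Suc t)
  let ?x = "theta_seq Q Pe \<theta>0 es t"
  let ?g = "\<rho> * L" and ?b = "\<rho> * M / (1 - \<rho> * L)"
  have "norm (Q (Pe (es t) ?x) - \<theta>s) = norm (Q (Pe (es t) ?x) - Q \<theta>s)" using Q_fix by simp
  also have "\<dots> \<le> \<rho> * norm (Pe (es t) ?x - \<theta>s)" by (rule Q_contr)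
  also have "norm (Pe (es t) ?x - \<theta>s) \<le> norm (Pe (es t) ?x - Pe (es t) \<theta>s) + norm (Pe (es t) \<theta>s - \<theta>s)"
    using norm_triangle_ineq[of "Pe (es t) ?x - Pe (es t) \<theta>s" "Pe (es t) \<theta>s - \<theta>s"] by simp
  also have "\<dots> \<le> L * norm (?x - \<theta>s) + M" using Pe_lip W by (intro add_mono) auto
  finally have A: "norm (Q (Pe (es t) ?x) - \<theta>s) \<le> \<rho> * (L * norm (?x - \<theta>s) + M)"
    using rho by (simp add: mult_left_mono)
  have L0: "0 \<le> \<rho> * L" using rho L by simp
  have "\<rho> * (L * norm (?x - \<theta>s) + M) = ?g * norm (?x - \<theta>s) + \<rho> * M" by algebra
  also have "\<dots> \<le> ?g * (?g ^ t * norm (\<theta>0 - \<theta>s) + ?b) + \<rho> * M"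
    using Suc.IH L0 by (simp add: mult_left_mono)
  also have "\<dots> = ?g ^ Suc t * norm (\<theta>0 - \<theta>s) + ?b"
    using g by (simp add: field_simps)
  finally show ?case using A by simp
qed

theorem lemma4p13:
  fixes Q :: "'a::banach \<Rightarrow> 'a"
    and Pe :: "'e \<Rightarrow> 'a \<Rightarrow> 'a"
    and P :: "'e measure"
    and \<Omega> :: "'w measure"
    and e :: "nat \<Rightarrow> 'w \<Rightarrow> 'e"
    and \<rho> L \<sigma> M r :: real
    and \<theta>s \<theta>0 :: 'a
  assumes P_prob: "prob_space P"
    and \<Omega>_prob: "prob_space \<Omega>"
    and rho: "0 \<le> \<rho>" "\<rho> < 1"
    and Q_contr: "\<And>x y. norm (Q x - Q y) \<le> \<rho> * norm (x - y)"
    and Q_fix: "Q \<theta>s = \<theta>s"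
    and Q_fix_unique: "\<And>\<theta>. Q \<theta> = \<theta> \<Longrightarrow> \<theta> = \<theta>s"
    and L: "0 \<le> L"
    and Pe_lip: "\<And>\<epsilon> x y. norm (Pe \<epsilon> x - Pe \<epsilon> y) \<le> L * norm (x - y)"
    and W_meas: "(\<lambda>\<epsilon>. norm (Pe \<epsilon> \<theta>s - \<theta>s)) \<in> borel_measurable P"
    and W_mean: "(\<integral>\<epsilon>. norm (Pe \<epsilon> \<theta>s - \<theta>s) \<partial>P) \<le> \<sigma>"
    and W_bound: "AE \<epsilon> in P. norm (Pe \<epsilon> \<theta>s - \<theta>s) \<le> M"
    and sigma_M: "0 \<le> \<sigma>" "\<sigma> \<le> M"
    and gamma: "\<rho> * L < 1"
    and e_meas: "\<And>t. e t \<in> measurable \<Omega> P"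
    and e_indep: "prob_space.indep_vars \<Omega> (\<lambda>_. P) e UNIV"
    and e_distr: "\<And>t. distr \<Omega> P (e t) = P"
    and r: "r > \<rho> * M / (1 - \<rho> * L)"
  shows "AE \<omega> in \<Omega>. \<forall>t \<ge> T0 (norm (\<theta>0 - \<theta>s)) \<rho> (\<rho> * L) M r.
           norm (theta_seq Q Pe \<theta>0 (\<lambda>n. e n \<omega>) t - \<theta>s) \<le> r"
proof -
  let ?W = "\<lambda>\<epsilon>. norm (Pe \<epsilon> \<theta>s - \<theta>s)"
  have AEn: "AE \<omega> in \<Omega>. ?W (e n \<omega>) \<le> M" for n
  proof -
    have "{x \<in> space P. ?W x \<le> M} \<in> sets P" using W_meas by measurable
    then have "(AE x in distr \<Omega> P (e n). ?W x \<le> M) \<longleftrightarrow> (AE x in \<Omega>. ?W (e n x) \<le> M)"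
      by (rule AE_distr_iff[OF e_meas])
    then show ?thesis using W_bound e_distr[of n] by metis
  qed
  have "AE \<omega> in \<Omega>. \<forall>n. ?W (e n \<omega>) \<le> M" using AEn by (simp add: AE_all_countable)
  then show ?thesis
  proof eventually_elim
    case (elim \<omega>)
    let ?g = "\<rho> * L" and ?b = "\<rho> * M / (1 - \<rho> * L)" and ?R = "norm (\<theta>0 - \<theta>s)"
    let ?c = "r - ?b"
    have c: "0 < ?c" using r by simp
    have g0: "0 \<le> ?g" using rho L by simp
    show ?case
    proof (intro allI impI)
      fix t assume t: "T0 ?R \<rho> ?g M r \<le> t"
      have B: "norm (theta_seq Q Pe \<theta>0 (\<lambda>n. e n \<omega>) t - \<theta>s) \<le> ?g ^ t * ?R + ?b"
        by (rule pathwise_bound[OF Q_contr Q_fix rho(1) Pe_lip _ gamma L]) (use elim in auto)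
      have "?g ^ t * ?R \<le> ?c"
      proof (cases "?R \<le> ?c")
        case True
        have "?g ^ t \<le> 1" using g0 gamma by (simp add: power_le_one)
        then have "?g ^ t * ?R \<le> 1 * ?R" by (intro mult_right_mono) auto
        then show ?thesis using True by simp
      next
        case False
        note F = False
        show ?thesis
        proof (cases "?g = 0")
          case True
          then have "T0 ?R \<rho> ?g M r = 1" using F unfolding T0_def Let_def by simp
          then have "t \<ge> 1" using t by simp
          then obtain k where "t = Suc k" by (cases t) auto
          then have "?g ^ t = 0" using True by (simp only: power_Suc mult_zero_left)
          then have "?g ^ t * ?R = 0" by (simp only: mult_zero_left)
          then show ?thesis using c by linarith
        next
          case False
          then have g1: "0 < ?g" using g0 by linarith
          have R0: "0 < ?R" using F c by linarith
          have "T0 ?R \<rho> ?g M r = nat \<lceil>ln (?R / ?c) / ln (1 / ?g)\<rceil>"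
            using F False unfolding T0_def Let_def by simp
          then have "ln (?R / ?c) / ln (1 / ?g) \<le> real t" using t by linarith
          moreover have lg: "0 < ln (1 / ?g)" using g1 gamma by simp
          ultimately have "ln (?R / ?c) \<le> real t * ln (1 / ?g)" by (simp add: divide_le_eq)
          also have "\<dots> = ln ((1 / ?g) ^ t)" using g1 by (simp add: ln_realpow)
          finally have "?R / ?c \<le> (1 / ?g) ^ t" using R0 c g1 by simp
          then have "?R / ?c \<le> 1 / ?g ^ t" by (simp add: power_one_over)
          then have h: "?R \<le> (1 / ?g ^ t) * ?c" using c by (simp only: pos_divide_le_eq)
          have gt: "0 < ?g ^ t" using g1 by simp
          have "?g ^ t * ?R \<le> ?g ^ t * ((1 / ?g ^ t) * ?c)" using h gt by (intro mult_left_mono) auto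
          also have "\<dots> = ?c" using gt by (intro cancel_aux) linarith
          finally show ?thesis .
        qed
      qed
      then show "norm (theta_seq Q Pe \<theta>0 (\<lambda>n. e n \<omega>) t - \<theta>s) \<le> r" using B by simp
    qed
  qed
qed

end
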